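(* Under the hypotheses of the context, for $\varepsilon>0$ let $(\mathbf m_\varepsilon,\rho_\varepsilon)\in V\times Q$ be the unique solution of $$(F^j(x,|\mathbf m_\varepsilon|)\mathbf m_\varepsilon,\mathbf v)+\varepsilon(\nabla\cdot\mathbf m_\varepsilon,\nabla\cdot\mathbf v)-(\nabla\cdot\mathbf v,\rho_\varepsilon)=-\langle\rho_b^j,\mathbf v\cdot\nu\rangle\ \ \forall\mathbf v\in V,\qquad \Bigl(\frac{\phi}{\Delta t}\rho_\varepsilon,q\Bigr)+(\nabla\cdot\mathbf m_\varepsilon,q)=(\bar f,q)\ \ \forall q\in Q,$$ where $\bar f=f^j+\frac{\phi}{\Delta t}\rho^{j-1}$. Then there exist constants $\mathcal K_1,\mathcal K_2>0$, independent of $\varepsilon$, such that for all sufficiently small $\varepsilon>0$, $$\|\mathbf m_\varepsilon\|_V\le\mathcal K_1\quad\text{and}\quad\|\rho_\varepsilon\|_{L^2(\Omega)}\le\mathcal K_2.$$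
   Context: Let $\Omega\subset\mathbb R^d$, $d\ge2$, be a bounded open set with $C^1$ boundary $\partial\Omega$ and outward unit normal $\nu$. Fix an integer $N\ge1$ and exponents $0=\alpha_0<\alpha_1<\dots<\alpha_N$; set $s=\alpha_N+2$ and $s^*=s/(s-1)$. Coefficients $a^j_0,\dots,a^j_N\in L^\infty(\Omega)$ satisfy $0<\underline a\le a^j_0,a^j_N\le\bar a$ and $0\le a^j_i\le\bar a$ for $1\le i\le N-1$, and $F^j(x,z)=\sum_{i=0}^N a^j_i(x)z^{\alpha_i}$ for $z\ge0$ (with $z^0=1$). Hypotheses: $\Delta t>0$; $0<\underline\phi\le\phi(x)\le\bar\phi<\infty$; $f^j\in L^2(\Omega)$; $\rho^{j-1}\in L^2(\Omega)$; $\rho^j_b\in W^{1/s,s}(\partial\Omega)$. $V=W(\mathrm{div};\Omega)=\{\mathbf v\in(L^s(\Omega))^d:\nabla\cdot\mathbf v\in L^2(\Omega)\}$ with norm $\|\mathbf v\|_V=\|\mathbf v\|_{L^s}+\|\nabla\cdot\mathbf v\|_{L^2}$, and $Q=L^2(\Omega)$; for $\mathbf v\in V$ the normal trace $\mathbf v\cdot\nu$ exists in $W^{-1/s,s^*}(\partial\Omega)$, and $\langle\rho_b^j,\mathbf v\cdot\nu\rangle$ denotes the duality pairing of $\rho^j_b$ with this normal trace. $(\cdot,\cdot)$ denotes the $L^2(\Omega)$ inner product. *)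

theory Defs
  imports "HOL-Analysis.Analysis"
begin

definition Lp_on :: "real \<Rightarrow> 'a::euclidean_space set \<Rightarrow> ('a \<Rightarrow> 'b::real_normed_vector) \<Rightarrow> bool" where
  "Lp_on p \<Omega> f \<longleftrightarrow> f \<in> borel_measurable (lebesgue_on \<Omega>) \<and>
      integrable (lebesgue_on \<Omega>) (\<lambda>x. norm (f x) powr p)"

definition Lp_norm :: "real \<Rightarrow> 'a::euclidean_space set \<Rightarrow> ('a \<Rightarrow> 'b::real_normed_vector) \<Rightarrow> real" where
  "Lp_norm p \<Omega> f = (integral\<^sup>L (lebesgue_on \<Omega>) (\<lambda>x. norm (f x) powr p)) powr (1 / p)"

definition L2_inner :: "'a::euclidean_space set \<Rightarrow> ('a \<Rightarrow> real) \<Rightarrow> ('a \<Rightarrow> real) \<Rightarrow> real" where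
  "L2_inner \<Omega> f g = integral\<^sup>L (lebesgue_on \<Omega>) (\<lambda>x. f x * g x)"

definition test_fun :: "'a::euclidean_space set \<Rightarrow> ('a \<Rightarrow> real) \<Rightarrow> ('a \<Rightarrow> 'a) \<Rightarrow> bool" where
  "test_fun \<Omega> \<psi> g \<longleftrightarrow> (\<forall>x. (\<psi> has_derivative (\<lambda>h. g x \<bullet> h)) (at x)) \<and> continuous_on UNIV g \<and>
      compact (closure {x. \<psi> x \<noteq> 0}) \<and> closure {x. \<psi> x \<noteq> 0} \<subseteq> \<Omega>"

definition weak_div :: "'a::euclidean_space set \<Rightarrow> ('a \<Rightarrow> 'a) \<Rightarrow> ('a \<Rightarrow> real) \<Rightarrow> bool" where
  "weak_div \<Omega> v D \<longleftrightarrow> (\<forall>\<psi> g. test_fun \<Omega> \<psi> g \<longrightarrow>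
      integral\<^sup>L (lebesgue_on \<Omega>) (\<lambda>x. v x \<bullet> g x) = - integral\<^sup>L (lebesgue_on \<Omega>) (\<lambda>x. D x * \<psi> x))"

definition weak_grad :: "'a::euclidean_space set \<Rightarrow> ('a \<Rightarrow> real) \<Rightarrow> ('a \<Rightarrow> 'a) \<Rightarrow> bool" where
  "weak_grad \<Omega> R G \<longleftrightarrow> (\<forall>\<psi> g. \<forall>e\<in>Basis. test_fun \<Omega> \<psi> g \<longrightarrow>
      integral\<^sup>L (lebesgue_on \<Omega>) (\<lambda>x. R x * (g x \<bullet> e)) = - integral\<^sup>L (lebesgue_on \<Omega>) (\<lambda>x. (G x \<bullet> e) * \<psi> x))"

text \<open>The space V = W(div;\<Omega>): v in L^s, with weak divergence D in L^2.\<close>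
definition in_Wdiv :: "'a::euclidean_space set \<Rightarrow> real \<Rightarrow> ('a \<Rightarrow> 'a) \<Rightarrow> ('a \<Rightarrow> real) \<Rightarrow> bool" where
  "in_Wdiv \<Omega> s v D \<longleftrightarrow> Lp_on s \<Omega> v \<and> Lp_on 2 \<Omega> D \<and> weak_div \<Omega> v D"

definition Wdiv_norm :: "'a::euclidean_space set \<Rightarrow> real \<Rightarrow> ('a \<Rightarrow> 'a) \<Rightarrow> ('a \<Rightarrow> real) \<Rightarrow> real" where
  "Wdiv_norm \<Omega> s v D = Lp_norm s \<Omega> v + Lp_norm 2 \<Omega> D"

definition C1_boundary :: "'a::euclidean_space set \<Rightarrow> bool" where
  "C1_boundary \<Omega> \<longleftrightarrow> (\<forall>x\<in>frontier \<Omega>. \<exists>r>0. \<exists>\<psi> g.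
      (\<forall>y\<in>ball x r. (\<psi> has_derivative (\<lambda>h. g y \<bullet> h)) (at y)) \<and> continuous_on (ball x r) g \<and>
      (\<forall>y\<in>ball x r. g y \<noteq> 0) \<and> (\<forall>y\<in>ball x r. y \<in> \<Omega> \<longleftrightarrow> \<psi> y < 0))"

text \<open>Duality pairing <\<rho>_b, v.\<nu>> for v in V with weak divergence D, where the boundary
  datum \<rho>_b is given as the trace of \<open>R\<close> (with weak gradient \<open>G\<close>); this is
  Green's formula, which defines the normal trace:
  <\<rho>_b, v.\<nu>> = \<integral>_\<Omega> (div v) R + v . grad R.\<close>
definition bdry_pair :: "'a::euclidean_space set \<Rightarrow> ('a \<Rightarrow> real) \<Rightarrow> ('a \<Rightarrow> 'a) \<Rightarrow> ('a \<Rightarrow> 'a) \<Rightarrow> ('a \<Rightarrow> real) \<Rightarrow> real" where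
  "bdry_pair \<Omega> R G v D = integral\<^sup>L (lebesgue_on \<Omega>) (\<lambda>x. D x * R x + v x \<bullet> G x)"

text \<open>F(x,z) = \<Sum>_{i=0}^N a_i(x) z^{\<alpha>_i}, with \<alpha>_0 = 0 and z^0 = 1.\<close>
definition Fcoef :: "(nat \<Rightarrow> 'a \<Rightarrow> real) \<Rightarrow> (nat \<Rightarrow> real) \<Rightarrow> nat \<Rightarrow> 'a \<Rightarrow> real \<Rightarrow> real" where
  "Fcoef a \<alpha> N x z = a 0 x + (\<Sum>i\<in>{1..N}. a i x * z powr \<alpha> i)"

end

theory Submission
  imports Defs
begin

lemma norm_powr2_real: "norm (x::real) powr 2 = x^2"
  by (cases "x = 0") auto

lemma int_bound:
  fixes M :: "'a measure" and g f :: "'a \<Rightarrow> real"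
  assumes "integrable M g" "f \<in> borel_measurable M" "\<And>x. x \<in> space M \<Longrightarrow> \<bar>f x\<bar> \<le> g x"
  shows "integrable M f"
proof (rule Bochner_Integration.integrable_bound[OF assms(1,2)])
  show "AE x in M. norm (f x) \<le> norm (g x)"
  proof (rule AE_I2)
    fix x assume "x \<in> space M"
    then have "\<bar>f x\<bar> \<le> g x" by (rule assms(3))
    then show "norm (f x) \<le> norm (g x)" by simp
  qed
qed

lemma abs_prod_le: "\<bar>a*b\<bar> \<le> (a^2+b^2)/(2::real)"
  using sum_squares_bound[of "\<bar>a\<bar>" "\<bar>b\<bar>"] by (simp add: abs_mult)

definition l2 :: "'a measure \<Rightarrow> ('a \<Rightarrow> real) \<Rightarrow> bool" where
  "l2 M f \<longleftrightarrow> f \<in> borel_measurable M \<and> integrable M (\<lambda>x. (f x)^2)"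

lemma Lp2_l2: "Lp_on 2 \<Omega> (f::'a::euclidean_space \<Rightarrow> real) \<longleftrightarrow> l2 (lebesgue_on \<Omega>) f"
  unfolding Lp_on_def l2_def norm_powr2_real by simp

lemma l2_mult_int:
  assumes "l2 M f" "l2 M g" shows "integrable M (\<lambda>x. f x * g x)"
proof (rule int_bound[where g="\<lambda>x. ((f x)^2 + (g x)^2)/2"])
  show "integrable M (\<lambda>x. ((f x)^2 + (g x)^2)/2)"
    using assms unfolding l2_def by auto
  show "(\<lambda>x. f x * g x) \<in> borel_measurable M" using assms unfolding l2_def by auto
  fix x
  show "\<bar>f x * g x\<bar> \<le> ((f x)^2 + (g x)^2)/2" by (rule abs_prod_le)
qed

lemma l2_add:
  assumes "l2 M f" "l2 M g" shows "l2 M (\<lambda>x. f x + g x)"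
  unfolding l2_def
proof
  show "(\<lambda>x. f x + g x) \<in> borel_measurable M" using assms unfolding l2_def by auto
  show "integrable M (\<lambda>x. (f x + g x)^2)"
  proof (rule int_bound[where g="\<lambda>x. 2*(f x)^2 + 2*(g x)^2"])
    show "integrable M (\<lambda>x. 2*(f x)^2 + 2*(g x)^2)"
      using assms unfolding l2_def by auto
    show "(\<lambda>x. (f x + g x)^2) \<in> borel_measurable M" using assms unfolding l2_def by auto
    fix x
    have "0 \<le> (f x - g x)^2" by simp
    hence "(f x + g x)^2 \<le> 2*(f x)^2 + 2*(g x)^2"
      by (simp add: power2_eq_square algebra_simps)
    thus "\<bar>(f x + g x)^2\<bar> \<le> 2*(f x)^2 + 2*(g x)^2" by simp
  qed
qed

lemma l2_bdd_mult:
  assumes "l2 M f" "h \<in> borel_measurable M" "\<And>x. x \<in> space M \<Longrightarrow> \<bar>h x\<bar> \<le> C"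
  shows "l2 M (\<lambda>x. h x * f x)"
  unfolding l2_def
proof
  show "(\<lambda>x. h x * f x) \<in> borel_measurable M" using assms unfolding l2_def by auto
  show "integrable M (\<lambda>x. (h x * f x)^2)"
  proof (rule int_bound[where g="\<lambda>x. C^2 * (f x)^2"])
    show "integrable M (\<lambda>x. C^2*(f x)^2)"
      using assms unfolding l2_def by auto
    show "(\<lambda>x. (h x * f x)^2) \<in> borel_measurable M" using assms unfolding l2_def by auto
    fix x assume x: "x \<in> space M"
    have "\<bar>h x\<bar>^2 \<le> C^2" using assms(3)[OF x] by (intro power_mono) auto
    hence "(h x)^2 \<le> C^2" by simp
    hence "(h x * f x)^2 \<le> C^2*(f x)^2"
      by (simp add: power_mult_distrib mult_right_mono)
    thus "\<bar>(h x * f x)^2\<bar> \<le> C^2*(f x)^2" by simp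
  qed
qed

lemma young_k:
  fixes a b s k :: real
  assumes "a \<ge> 0" "b \<ge> 0" "s > 1" "k > 0"
  shows "a * b \<le> k powr s / s * a powr s + b powr (s/(s-1)) / ((s/(s-1)) * k powr (s/(s-1)))"
proof -
  have "(k*a) * (b/k) \<le> (k*a) powr s / s + (b/k) powr (s/(s-1)) / (s/(s-1))"
    using assms by (intro Youngs_inequality) (auto simp: field_simps)
  also have "(k*a) powr s = k powr s * a powr s" using assms by (simp add: powr_mult)
  also have "(b/k) powr (s/(s-1)) = b powr (s/(s-1)) / k powr (s/(s-1))"
    using assms by (simp add: powr_divide)
  finally show ?thesis using assms by (simp add: field_simps)
qed

lemma powr_le_1_plus:
  fixes z p s :: real
  assumes "z \<ge> 0" "0 \<le> p" "p \<le> s"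
  shows "z powr p \<le> 1 + z powr s"
proof (cases "z \<le> 1")
  case True
  then have "z powr p \<le> 1" using assms by (intro powr_le1) auto
  then show ?thesis using powr_ge_zero[of z s] by linarith
next
  case False
  then have "z powr p \<le> z powr s" using assms by (intro powr_mono) auto
  then show ?thesis by linarith
qed

lemma powr_times_sq:
  fixes z b :: real
  assumes "z \<ge> 0"
  shows "z powr b * z^2 = z powr (b+2)"
proof (cases "z = 0")
  case False
  then show ?thesis using assms by (simp add: powr_add)
qed simp

lemma quad_le: "c > 0 \<Longrightarrow> u * w \<le> c/4 * w^2 + u^2 / (c::real)"
proof -
  assume c: "c > 0"
  have "c/4 * w^2 + u^2 / c - u * w = (c*w - 2*u)^2 / (4*c)"
    using c by (simp add: field_simps power2_eq_square)
  moreover have "0 \<le> (c*w - 2*u)^2 / (4*c)" using c by simp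
  ultimately show ?thesis by linarith
qed

lemma Fcoef_bounds:
  fixes z ah al :: real
  assumes z: "z \<ge> 0" and N: "N \<ge> 1"
    and ai: "\<And>i. 1 \<le> i \<Longrightarrow> i \<le> N \<Longrightarrow> 0 \<le> a i x \<and> a i x \<le> ah"
    and a0: "0 \<le> a 0 x" "a 0 x \<le> ah" and aN: "al \<le> a N x"
    and al: "\<And>i. i \<le> N \<Longrightarrow> 0 \<le> \<alpha> i \<and> \<alpha> i \<le> \<alpha> N"
  shows "al * z powr (\<alpha> N + 2) \<le> Fcoef a \<alpha> N x z * z^2"
    and "0 \<le> Fcoef a \<alpha> N x z * z^2"
    and "Fcoef a \<alpha> N x z * z^2 \<le> (real N + 1) * ah * (1 + z powr (\<alpha> N + 2))"
proof -
  have eq: "Fcoef a \<alpha> N x z * z^2 = a 0 x * z^2 + (\<Sum>i\<in>{1..N}. a i x * z powr (\<alpha> i + 2))"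
  proof -
    have "Fcoef a \<alpha> N x z * z^2 = a 0 x * z^2 + (\<Sum>i\<in>{1..N}. a i x * (z powr \<alpha> i * z^2))"
      unfolding Fcoef_def by (simp add: distrib_right sum_distrib_right mult.assoc)
    also have "\<dots> = a 0 x * z^2 + (\<Sum>i\<in>{1..N}. a i x * z powr (\<alpha> i + 2))"
      using powr_times_sq[OF z] by simp
    finally show ?thesis .
  qed
  have tnn: "\<And>i. i \<in> {1..N} \<Longrightarrow> 0 \<le> a i x * z powr (\<alpha> i + 2)"
    using ai by auto
  have "a N x * z powr (\<alpha> N + 2) \<le> (\<Sum>i\<in>{1..N}. a i x * z powr (\<alpha> i + 2))"
    using N tnn by (intro member_le_sum) auto
  moreover have "al * z powr (\<alpha> N + 2) \<le> a N x * z powr (\<alpha> N + 2)"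
    using aN by (intro mult_right_mono) auto
  moreover have "0 \<le> a 0 x * z^2" using a0 by simp
  ultimately show "al * z powr (\<alpha> N + 2) \<le> Fcoef a \<alpha> N x z * z^2" unfolding eq by linarith
  show "0 \<le> Fcoef a \<alpha> N x z * z^2" unfolding eq using a0 tnn
    by (intro add_nonneg_nonneg sum_nonneg) auto
  have b: "\<And>p. 0 \<le> p \<Longrightarrow> p \<le> \<alpha> N + 2 \<Longrightarrow> z powr p \<le> 1 + z powr (\<alpha> N + 2)"
    using z by (intro powr_le_1_plus) auto
  have "z^2 \<le> 1 + z powr (\<alpha> N + 2)" using b[of 2] al[of N] z by simp
  hence t0: "a 0 x * z^2 \<le> ah * (1 + z powr (\<alpha> N + 2))"
    using a0 by (meson mult_mono order_trans zero_le_power2)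
  have ti: "a i x * z powr (\<alpha> i + 2) \<le> ah * (1 + z powr (\<alpha> N + 2))" if "i \<in> {1..N}" for i
  proof -
    have "z powr (\<alpha> i + 2) \<le> 1 + z powr (\<alpha> N + 2)" using b al[of i] that by auto
    thus ?thesis using ai[of i] that by (intro mult_mono) auto
  qed
  have "(\<Sum>i\<in>{1..N}. a i x * z powr (\<alpha> i + 2)) \<le> (\<Sum>i\<in>{1..N}. ah * (1 + z powr (\<alpha> N + 2)))"
    using ti by (rule sum_mono)
  also have "\<dots> = real N * (ah * (1 + z powr (\<alpha> N + 2)))" by simp
  finally show "Fcoef a \<alpha> N x z * z^2 \<le> (real N + 1) * ah * (1 + z powr (\<alpha> N + 2))"
    unfolding eq using t0 by (simp add: algebra_simps)
qed

lemma sq_diff_le: "(a - b)^2 \<le> 2 * a^2 + 2 * (b::real)^2"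
proof -
  have "(a - b)^2 + (a + b)^2 = 2 * a^2 + 2 * b^2" by (simp add: power2_eq_square algebra_simps)
  moreover have "0 \<le> (a + b)^2" by simp
  ultimately show ?thesis by linarith
qed

lemma int_ge1:
  fixes f g :: "'a \<Rightarrow> real"
  assumes "integrable M f" "integrable M g" "\<And>x. x \<in> space M \<Longrightarrow> a * g x \<le> f x"
  shows "a * integral\<^sup>L M g \<le> integral\<^sup>L M f"
proof -
  have "integral\<^sup>L M (\<lambda>x. a * g x) \<le> integral\<^sup>L M f"
    using assms by (intro integral_mono) auto
  thus ?thesis by simp
qed

lemma int_le2:
  fixes f g1 g2 :: "'a \<Rightarrow> real"
  assumes "integrable M f" "integrable M g1" "integrable M g2"
    "\<And>x. x \<in> space M \<Longrightarrow> f x \<le> a * g1 x + b * g2 x"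
  shows "integral\<^sup>L M f \<le> a * integral\<^sup>L M g1 + b * integral\<^sup>L M g2"
proof -
  have "integral\<^sup>L M f \<le> integral\<^sup>L M (\<lambda>x. a * g1 x + b * g2 x)"
    using assms by (intro integral_mono) auto
  also have "\<dots> = a * integral\<^sup>L M g1 + b * integral\<^sup>L M g2"
    using assms by simp
  finally show ?thesis .
qed

lemma int_le3:
  fixes f g1 g2 g3 :: "'a \<Rightarrow> real"
  assumes "integrable M f" "integrable M g1" "integrable M g2" "integrable M g3"
    "\<And>x. x \<in> space M \<Longrightarrow> f x \<le> a * g1 x + b * g2 x + d * g3 x"
  shows "integral\<^sup>L M f \<le> a * integral\<^sup>L M g1 + b * integral\<^sup>L M g2 + d * integral\<^sup>L M g3"
proof -
  have "integral\<^sup>L M f \<le> integral\<^sup>L M (\<lambda>x. a * g1 x + b * g2 x + d * g3 x)"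
    using assms by (intro integral_mono) auto
  also have "\<dots> = a * integral\<^sup>L M g1 + b * integral\<^sup>L M g2 + d * integral\<^sup>L M g3"
    using assms by simp
  finally show ?thesis .
qed

theorem lemma3p2:
  fixes \<Omega> :: "'a::euclidean_space set"
    and N :: nat and \<alpha> :: "nat \<Rightarrow> real" and a :: "nat \<Rightarrow> 'a \<Rightarrow> real"
    and a_lo a_hi dt phi_lo phi_hi :: real
    and phi f rho_prev R :: "'a \<Rightarrow> real" and G :: "'a \<Rightarrow> 'a"
  assumes dim: "DIM('a) \<ge> 2"
    and dom: "open \<Omega>" "bounded \<Omega>" "C1_boundary \<Omega>"
    and N: "N \<ge> 1"
    and alpha0: "\<alpha> 0 = 0"
    and alpha_mono: "\<And>i. i < N \<Longrightarrow> \<alpha> i < \<alpha> (Suc i)"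
    and a_meas: "\<And>i. i \<le> N \<Longrightarrow> a i \<in> borel_measurable (lebesgue_on \<Omega>)"
    and a_lo: "0 < a_lo" and a_hi: "a_lo \<le> a_hi"
    and a_end: "\<And>x. x \<in> \<Omega> \<Longrightarrow> a_lo \<le> a 0 x \<and> a 0 x \<le> a_hi \<and> a_lo \<le> a N x \<and> a N x \<le> a_hi"
    and a_mid: "\<And>i x. 1 \<le> i \<Longrightarrow> i \<le> N - 1 \<Longrightarrow> x \<in> \<Omega> \<Longrightarrow> 0 \<le> a i x \<and> a i x \<le> a_hi"
    and dt: "dt > 0"
    and phi_meas: "phi \<in> borel_measurable (lebesgue_on \<Omega>)"
    and phi_bd: "0 < phi_lo" "\<And>x. x \<in> \<Omega> \<Longrightarrow> phi_lo \<le> phi x \<and> phi x \<le> phi_hi"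
    and f: "Lp_on 2 \<Omega> f"
    and rho_prev: "Lp_on 2 \<Omega> rho_prev"
    and bdry: "Lp_on 2 \<Omega> R" "Lp_on ((\<alpha> N + 2) / (\<alpha> N + 1)) \<Omega> G" "weak_grad \<Omega> R G"
  shows "\<exists>K1>0. \<exists>K2>0. \<exists>\<epsilon>0>0. \<forall>\<epsilon> m rho Dm.
      0 < \<epsilon> \<and> \<epsilon> < \<epsilon>0 \<and>
      in_Wdiv \<Omega> (\<alpha> N + 2) m Dm \<and> Lp_on 2 \<Omega> rho \<and>
      (\<forall>v Dv. in_Wdiv \<Omega> (\<alpha> N + 2) v Dv \<longrightarrow>
          integral\<^sup>L (lebesgue_on \<Omega>) (\<lambda>x. Fcoef a \<alpha> N x (norm (m x)) * (m x \<bullet> v x))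
          + \<epsilon> * L2_inner \<Omega> Dm Dv - L2_inner \<Omega> Dv rho
          = - bdry_pair \<Omega> R G v Dv) \<and>
      (\<forall>q. Lp_on 2 \<Omega> q \<longrightarrow>
          L2_inner \<Omega> (\<lambda>x. phi x / dt * rho x) q + L2_inner \<Omega> Dm q
          = L2_inner \<Omega> (\<lambda>x. f x + phi x / dt * rho_prev x) q)
      \<longrightarrow> Wdiv_norm \<Omega> (\<alpha> N + 2) m Dm \<le> K1 \<and> Lp_norm 2 \<Omega> rho \<le> K2"
proof -
  define M where "M = lebesgue_on \<Omega>"
  define s where "s = \<alpha> N + 2"
  define t where "t = s / (s - 1)"
  have t_eq: "(\<alpha> N + 2) / (\<alpha> N + 1) = t" unfolding t_def s_def by (simp add: algebra_simps)
  have \<Omega>l: "\<Omega> \<in> lmeasurable" using dom by (simp add: lmeasurable_open)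
  have fin: "finite_measure M" unfolding M_def by (rule finite_measure_lebesgue_on[OF \<Omega>l])
  have spM: "space M = \<Omega>" by (simp add: M_def)
  have cint: "\<And>c::real. integrable M (\<lambda>x. c)" using fin finite_measure.integrable_const by blast
  have amono: "\<alpha> i \<le> \<alpha> j" if "i \<le> j" "j \<le> N" for i j
    using that
  proof (induction j)
    case 0 thus ?case by simp
  next
    case (Suc j)
    show ?case
    proof (cases "i = Suc j")
      case True thus ?thesis by simp
    next
      case False
      then have "i \<le> j" using Suc.prems by simp
      then have "\<alpha> i \<le> \<alpha> j" using Suc.IH Suc.prems by simp
      also have "\<alpha> j < \<alpha> (Suc j)" using alpha_mono Suc.prems by simp
      finally show ?thesis by simp
    qed
  qed
  have apos: "0 < \<alpha> i" if "1 \<le> i" "i \<le> N" for i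
  proof -
    have "\<alpha> 0 < \<alpha> 1" using alpha_mono[of 0] N by simp
    also have "\<alpha> 1 \<le> \<alpha> i" using amono that by simp
    finally show ?thesis using alpha0 by simp
  qed
  have aN: "0 < \<alpha> N" using apos N by simp
  have s2: "s > 2" using aN s_def by simp
  have ange: "0 \<le> \<alpha> i \<and> \<alpha> i \<le> \<alpha> N" if "i \<le> N" for i
    using that apos[of i] alpha0 amono[of i N] by (cases "i = 0") auto
  have aabs: "0 \<le> a i x \<and> a i x \<le> a_hi" if "1 \<le> i" "i \<le> N" "x \<in> \<Omega>" for i x
  proof (cases "i = N")
    case True thus ?thesis using a_end[OF that(3)] a_lo by auto
  next
    case False thus ?thesis using a_mid[of i x] that by auto
  qed
  define P where "P = max phi_hi 1"
  define c where "c = phi_lo / dt"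
  have cpos: "c > 0" using phi_bd dt c_def by simp
  have Ppos: "P > 0" using P_def by simp
  have phic: "c \<le> phi x / dt \<and> phi x / dt \<le> P / dt" if "x \<in> \<Omega>" for x
    using phi_bd(2)[OF that] dt unfolding c_def P_def by (auto simp: divide_right_mono)
  have phim: "(\<lambda>x. phi x / dt) \<in> borel_measurable M" using phi_meas M_def by simp
  have phiabs: "\<bar>phi x / dt\<bar> \<le> P / dt" if "x \<in> space M" for x
    using phic[of x] cpos that spM by auto
  have l2f: "l2 M f" using f Lp2_l2 M_def by blast
  have l2rp: "l2 M rho_prev" using rho_prev Lp2_l2 M_def by blast
  have l2R: "l2 M R" using bdry(1) Lp2_l2 M_def by blast
  define fb where "fb = (\<lambda>x. f x + phi x / dt * rho_prev x)"
  have l2fb: "l2 M fb" unfolding fb_def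
    using l2_add[OF l2f l2_bdd_mult[OF l2rp phim phiabs]] by simp
  have intG: "integrable M (\<lambda>x. norm (G x) powr t)" and Gm: "G \<in> borel_measurable M"
    using bdry(2) t_eq M_def unfolding Lp_on_def by auto
  define KG where "KG = integral\<^sup>L M (\<lambda>x. norm (G x) powr t)"
  define Kfb where "Kfb = integral\<^sup>L M (\<lambda>x. (fb x)^2)"
  define KR where "KR = integral\<^sup>L M (\<lambda>x. (R x)^2)"
  define k where "k = (s * a_lo / 2) powr (1/s)"
  have kpos: "k > 0" using k_def s2 a_lo by simp
  have ks: "k powr s / s = a_lo / 2" using s2 a_lo unfolding k_def by (simp add: powr_powr)
  define Cd where "Cd = 1 / (t * k powr t)"
  have young: "u * w \<le> a_lo / 2 * u powr s + Cd * w powr t" if "u \<ge> 0" "w \<ge> 0" for u w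
    using young_k[OF that _ kpos, of s] s2 ks unfolding Cd_def t_def by (simp add: mult.commute)
  define B0 where "B0 = 1/c * Kfb + (1/2 * Kfb + 1/2 * KR) + (P/dt)^2/c * KR + Cd * KG"
  define K1 where "K1 = (2*B0/a_lo) powr (1/s) + (2*Kfb + 2*(P/dt)^2*(2*B0/c)) powr (1/2) + 1"
  define K2 where "K2 = (2*B0/c) powr (1/2) + 1"
  have K1pos: "K1 > 0" unfolding K1_def
    using powr_ge_zero[of "2*B0/a_lo" "1/s"] powr_ge_zero[of "2*Kfb + 2*(P/dt)^2*(2*B0/c)" "1/2"] by linarith
  have K2pos: "K2 > 0" unfolding K2_def using powr_ge_zero[of "2*B0/c" "1/2"] by linarith
  show ?thesis
  proof (rule exI[of _ K1], rule conjI[OF K1pos], rule exI[of _ K2], rule conjI[OF K2pos],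
      rule exI[of _ 1], rule conjI, simp, intro allI impI, elim conjE)
    fix \<epsilon> m rho Dm
    assume e0: "0 < \<epsilon>" and e1: "\<epsilon> < 1" and mW: "in_Wdiv \<Omega> (\<alpha> N + 2) m Dm"
      and rhoL: "Lp_on 2 \<Omega> rho"
      and eq1: "\<forall>v Dv. in_Wdiv \<Omega> (\<alpha> N + 2) v Dv \<longrightarrow>
          integral\<^sup>L (lebesgue_on \<Omega>) (\<lambda>x. Fcoef a \<alpha> N x (norm (m x)) * (m x \<bullet> v x))
          + \<epsilon> * L2_inner \<Omega> Dm Dv - L2_inner \<Omega> Dv rho
          = - bdry_pair \<Omega> R G v Dv"
      and eq2: "\<forall>q. Lp_on 2 \<Omega> q \<longrightarrow>
          L2_inner \<Omega> (\<lambda>x. phi x / dt * rho x) q + L2_inner \<Omega> Dm q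
          = L2_inner \<Omega> (\<lambda>x. f x + phi x / dt * rho_prev x) q"
    have mm: "m \<in> borel_measurable M" and intm: "integrable M (\<lambda>x. norm (m x) powr s)"
      using mW unfolding in_Wdiv_def Lp_on_def M_def s_def by auto
    have DmL: "Lp_on 2 \<Omega> Dm" using mW unfolding in_Wdiv_def by auto
    have l2Dm: "l2 M Dm" using DmL Lp2_l2 M_def by blast
    have l2rho: "l2 M rho" using rhoL Lp2_l2 M_def by blast
    have l2hr: "l2 M (\<lambda>x. phi x / dt * rho x)" using l2_bdd_mult[OF l2rho phim phiabs] by simp
    have l2fbsq: "integrable M (\<lambda>x. (fb x)^2)" using l2fb l2_def by blast
    have l2Rsq: "integrable M (\<lambda>x. (R x)^2)" using l2R l2_def by blast
    have l2rhosq: "integrable M (\<lambda>x. (rho x)^2)" using l2rho l2_def by blast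
    define X where "X = integral\<^sup>L M (\<lambda>x. norm (m x) powr s)"
    define Y where "Y = integral\<^sup>L M (\<lambda>x. (rho x)^2)"
    define A where "A = integral\<^sup>L M (\<lambda>x. Dm x * Dm x)"
    define Fm where "Fm = (\<lambda>x. Fcoef a \<alpha> N x (norm (m x)) * (m x \<bullet> m x))"
    have am: "a i \<in> borel_measurable M" if "i \<le> N" for i using a_meas that M_def by simp
    have pw: "(\<lambda>x. norm (m x) powr p) \<in> borel_measurable M" for p
      using measurable_abs_powr[of "\<lambda>x. norm (m x)" M p] mm by simp
    have Fmeas: "Fm \<in> borel_measurable M"
      unfolding Fm_def Fcoef_def
      by (intro borel_measurable_times borel_measurable_add borel_measurable_sum borel_measurable_inner
          mm am pw borel_measurable_const) auto
    have Fb: "a_lo * norm (m x) powr s \<le> Fm x \<and> 0 \<le> Fm x \<and> Fm x \<le> (real N + 1) * a_hi * (1 + norm (m x) powr s)"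
      if x: "x \<in> \<Omega>" for x
    proof -
      have mx: "m x \<bullet> m x = (norm (m x))^2" by (simp add: power2_norm_eq_inner)
      have a00: "0 \<le> a 0 x" using a_end[OF x] a_lo by linarith
      note B = Fcoef_bounds[of "norm (m x)" N a x a_hi a_lo \<alpha>, OF _ N aabs[OF _ _ x] a00]
      show ?thesis unfolding Fm_def s_def mx
        using B a_end[OF x] ange by auto
    qed
    have intF: "integrable M Fm"
    proof (rule int_bound[OF _ Fmeas])
      show "integrable M (\<lambda>x. (real N + 1) * a_hi * (1 + norm (m x) powr s))"
        using cint intm by (intro integrable_mult_right integrable_add) auto
      fix x assume "x \<in> space M"
      thus "\<bar>Fm x\<bar> \<le> (real N + 1) * a_hi * (1 + norm (m x) powr s)" using Fb spM by auto
    qed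
    have mGb: "\<bar>m x \<bullet> G x\<bar> \<le> a_lo / 2 * norm (m x) powr s + Cd * norm (G x) powr t" for x
      using Cauchy_Schwarz_ineq2[of "m x" "G x"] young[of "norm (m x)" "norm (G x)"] by simp
    have intmG: "integrable M (\<lambda>x. m x \<bullet> G x)"
    proof (rule int_bound[OF _ borel_measurable_inner[OF mm Gm]])
      show "integrable M (\<lambda>x. a_lo / 2 * norm (m x) powr s + Cd * norm (G x) powr t)"
        using intm intG by simp
      fix x show "\<bar>m x \<bullet> G x\<bar> \<le> a_lo / 2 * norm (m x) powr s + Cd * norm (G x) powr t" by (rule mGb)
    qed
    have intDmDm: "integrable M (\<lambda>x. Dm x * Dm x)" by (rule l2_mult_int[OF l2Dm l2Dm])
    have intDmrho: "integrable M (\<lambda>x. Dm x * rho x)" by (rule l2_mult_int[OF l2Dm l2rho])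
    have intDmR: "integrable M (\<lambda>x. Dm x * R x)" by (rule l2_mult_int[OF l2Dm l2R])
    have intQ1: "integrable M (\<lambda>x. phi x / dt * rho x * rho x)" by (rule l2_mult_int[OF l2hr l2rho])
    have intQ2: "integrable M (\<lambda>x. phi x / dt * rho x * R x)" by (rule l2_mult_int[OF l2hr l2R])
    have intQ3: "integrable M (\<lambda>x. phi x / dt * rho x * Dm x)" by (rule l2_mult_int[OF l2hr l2Dm])
    have intE1: "integrable M (\<lambda>x. fb x * rho x)" by (rule l2_mult_int[OF l2fb l2rho])
    have intE2: "integrable M (\<lambda>x. fb x * R x)" by (rule l2_mult_int[OF l2fb l2R])
    have intE3: "integrable M (\<lambda>x. fb x * Dm x)" by (rule l2_mult_int[OF l2fb l2Dm])
    have Eq1: "integral\<^sup>L M Fm + \<epsilon> * A - integral\<^sup>L M (\<lambda>x. Dm x * rho x)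
        = - integral\<^sup>L M (\<lambda>x. Dm x * R x + m x \<bullet> G x)"
      using eq1[rule_format, OF mW] unfolding L2_inner_def bdry_pair_def M_def A_def Fm_def .
    have Eq1': "integral\<^sup>L M (\<lambda>x. Dm x * R x + m x \<bullet> G x)
        = integral\<^sup>L M (\<lambda>x. Dm x * R x) + integral\<^sup>L M (\<lambda>x. m x \<bullet> G x)"
      by (rule Bochner_Integration.integral_add[OF intDmR intmG])
    have Eq2a: "integral\<^sup>L M (\<lambda>x. phi x / dt * rho x * rho x) + integral\<^sup>L M (\<lambda>x. Dm x * rho x)
        = integral\<^sup>L M (\<lambda>x. fb x * rho x)"
      using eq2[rule_format, OF rhoL] unfolding fb_def[symmetric] L2_inner_def M_def .
    have Eq2b: "integral\<^sup>L M (\<lambda>x. phi x / dt * rho x * R x) + integral\<^sup>L M (\<lambda>x. Dm x * R x)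
        = integral\<^sup>L M (\<lambda>x. fb x * R x)"
      using eq2[rule_format, OF bdry(1)] unfolding fb_def[symmetric] L2_inner_def M_def .
    have Eq2c: "integral\<^sup>L M (\<lambda>x. phi x / dt * rho x * Dm x) + A
        = integral\<^sup>L M (\<lambda>x. fb x * Dm x)"
      using eq2[rule_format, OF DmL] unfolding fb_def[symmetric] L2_inner_def M_def A_def .
    have Anonneg: "0 \<le> A" unfolding A_def by (rule Bochner_Integration.integral_nonneg) simp
    have Xnonneg: "0 \<le> X" unfolding X_def by (rule Bochner_Integration.integral_nonneg) simp
    have Ynonneg: "0 \<le> Y" unfolding Y_def by (rule Bochner_Integration.integral_nonneg) simp
    have I1: "a_lo * X \<le> integral\<^sup>L M Fm" unfolding X_def
      by (rule int_ge1[OF intF intm]) (use Fb spM in auto)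
    have I2: "c * Y \<le> integral\<^sup>L M (\<lambda>x. phi x / dt * rho x * rho x)" unfolding Y_def
    proof (rule int_ge1[OF intQ1 l2rhosq])
      fix x assume "x \<in> space M"
      then have "c \<le> phi x / dt" using phic spM by auto
      then have "c * (rho x * rho x) \<le> phi x / dt * (rho x * rho x)" by (rule mult_right_mono) simp
      thus "c * (rho x)^2 \<le> phi x / dt * rho x * rho x" by (simp add: power2_eq_square mult.assoc)
    qed
    have I3: "integral\<^sup>L M (\<lambda>x. fb x * rho x) \<le> c/4 * Y + 1/c * Kfb" unfolding Y_def Kfb_def
      by (rule int_le2[OF intE1 l2rhosq l2fbsq]) (use quad_le[OF cpos] in simp)
    have I4: "integral\<^sup>L M (\<lambda>x. - (fb x * R x)) \<le> 1/2 * Kfb + 1/2 * KR" unfolding KR_def Kfb_def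
    proof (rule int_le2[OF _ l2fbsq l2Rsq])
      show "integrable M (\<lambda>x. - (fb x * R x))" using intE2 by simp
      fix x show "- (fb x * R x) \<le> 1/2 * (fb x)^2 + 1/2 * (R x)^2"
        using order_trans[OF abs_ge_minus_self abs_prod_le[of "fb x" "R x"]] by simp
    qed
    have I5: "integral\<^sup>L M (\<lambda>x. phi x / dt * rho x * R x) \<le> c/4 * Y + (P/dt)^2/c * KR"
      unfolding KR_def Y_def
    proof (rule int_le2[OF intQ2 l2rhosq l2Rsq])
      fix x assume x: "x \<in> space M"
      have "phi x / dt * rho x * R x = (phi x / dt * R x) * rho x" by simp
      also have "\<dots> \<le> c/4 * (rho x)^2 + (phi x / dt * R x)^2 / c" by (rule quad_le[OF cpos])
      also have "(phi x / dt * R x)^2 \<le> (P/dt)^2 * (R x)^2"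
      proof -
        have h: "(phi x / dt)^2 \<le> (P/dt)^2"
          using power_mono[OF phiabs[OF x] abs_ge_zero, where n=2] by (simp only: power2_abs)
        have "(phi x / dt * R x)^2 = (phi x / dt)^2 * (R x)^2" by (rule power_mult_distrib)
        thus ?thesis using mult_right_mono[OF h zero_le_power2[of "R x"]] by simp
      qed
      hence "(phi x / dt * R x)^2 / c \<le> (P/dt)^2 * (R x)^2 / c" using cpos by (simp add: divide_right_mono)
      finally show "phi x / dt * rho x * R x \<le> c/4 * (rho x)^2 + (P/dt)^2/c * (R x)^2" by simp
    qed
    have I6: "integral\<^sup>L M (\<lambda>x. - (m x \<bullet> G x)) \<le> a_lo/2 * X + Cd * KG" unfolding X_def KG_def
    proof (rule int_le2[OF _ intm intG])
      show "integrable M (\<lambda>x. - (m x \<bullet> G x))" using intmG by simp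
      fix x show "- (m x \<bullet> G x) \<le> a_lo/2 * norm (m x) powr s + Cd * norm (G x) powr t"
        using order_trans[OF abs_ge_minus_self mGb[of x]] by simp
    qed
    have "0 \<le> \<epsilon> * A" using e0 Anonneg by simp
    have XY: "a_lo/2 * X + c/2 * Y \<le> B0"
      using Eq1 Eq1' Eq2a Eq2b I1 I2 I3 I4 I5 I6 \<open>0 \<le> \<epsilon> * A\<close> unfolding B0_def by simp
    have cY: "0 \<le> c * Y" and aX: "0 \<le> a_lo * X" using Ynonneg Xnonneg cpos a_lo by simp_all
    have "a_lo * X \<le> 2*B0" using XY cY by linarith
    hence Xb: "X \<le> 2*B0/a_lo" using a_lo by (simp add: pos_le_divide_eq mult.commute)
    have "c * Y \<le> 2*B0" using XY aX by linarith
    hence Yb: "Y \<le> 2*B0/c" using cpos by (simp add: pos_le_divide_eq mult.commute)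
    have I7: "integral\<^sup>L M (\<lambda>x. fb x * Dm x - phi x / dt * rho x * Dm x)
        \<le> 1/2 * A + 1 * Kfb + (P/dt)^2 * Y" unfolding A_def Kfb_def Y_def
    proof (rule int_le3[OF _ intDmDm l2fbsq l2rhosq])
      show "integrable M (\<lambda>x. fb x * Dm x - phi x / dt * rho x * Dm x)" using intE3 intQ3 by simp
      fix x assume x: "x \<in> space M"
      have "fb x * Dm x - phi x / dt * rho x * Dm x = (fb x - phi x / dt * rho x) * Dm x"
        by (simp add: algebra_simps)
      also have "\<dots> \<le> ((fb x - phi x / dt * rho x)^2 + (Dm x)^2) / 2"
        using order_trans[OF abs_ge_self abs_prod_le[of "fb x - phi x / dt * rho x" "Dm x"]] by simp
      also have "(fb x - phi x / dt * rho x)^2 \<le> 2 * (fb x)^2 + 2 * (phi x / dt * rho x)^2"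
        by (rule sq_diff_le)
      also have "(phi x / dt * rho x)^2 \<le> (P/dt)^2 * (rho x)^2"
      proof -
        have h: "(phi x / dt)^2 \<le> (P/dt)^2"
          using power_mono[OF phiabs[OF x] abs_ge_zero, where n=2] by (simp only: power2_abs)
        have "(phi x / dt * rho x)^2 = (phi x / dt)^2 * (rho x)^2" by (rule power_mult_distrib)
        thus ?thesis using mult_right_mono[OF h zero_le_power2[of "rho x"]] by simp
      qed
      finally show "fb x * Dm x - phi x / dt * rho x * Dm x
          \<le> 1/2 * (Dm x * Dm x) + 1 * (fb x)^2 + (P/dt)^2 * (rho x)^2"
        by (simp add: power2_eq_square divide_right_mono) (simp add: field_simps)
    qed
    have "integral\<^sup>L M (\<lambda>x. fb x * Dm x - phi x / dt * rho x * Dm x)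
        = integral\<^sup>L M (\<lambda>x. fb x * Dm x) - integral\<^sup>L M (\<lambda>x. phi x / dt * rho x * Dm x)"
      by (rule Bochner_Integration.integral_diff[OF intE3 intQ3])
    hence Ab0: "A \<le> 2 * Kfb + 2 * (P/dt)^2 * Y" using I7 Eq2c by linarith
    have "2 * (P/dt)^2 * Y \<le> 2 * (P/dt)^2 * (2*B0/c)" using Yb by (intro mult_left_mono) auto
    hence Ab: "A \<le> 2*Kfb + 2*(P/dt)^2*(2*B0/c)" using Ab0 by linarith
    have nW: "Wdiv_norm \<Omega> (\<alpha> N + 2) m Dm = X powr (1/s) + A powr (1/2)"
      unfolding Wdiv_norm_def Lp_norm_def X_def A_def M_def s_def
      by (simp add: norm_powr2_real power2_eq_square)
    have nr: "Lp_norm 2 \<Omega> rho = Y powr (1/2)"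
      unfolding Lp_norm_def Y_def M_def by (simp add: norm_powr2_real)
    have "X powr (1/s) \<le> (2*B0/a_lo) powr (1/s)" using Xb Xnonneg s2 by (intro powr_mono2) auto
    moreover have "A powr (1/2) \<le> (2*Kfb + 2*(P/dt)^2*(2*B0/c)) powr (1/2)"
      using Ab Anonneg by (intro powr_mono2) auto
    moreover have "Y powr (1/2) \<le> (2*B0/c) powr (1/2)" using Yb Ynonneg by (intro powr_mono2) auto
    ultimately show "Wdiv_norm \<Omega> (\<alpha> N + 2) m Dm \<le> K1 \<and> Lp_norm 2 \<Omega> rho \<le> K2"
      unfolding nW nr K1_def K2_def by linarith
  qed
qed

end
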